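(* Let $P_1$ be the substitution on words over the alphabet $\{\mathtt R,\mathtt r,\mathtt L,\mathtt l,\mathtt S,\mathtt s\}$ given by $\mathtt R\mapsto\mathtt{Rr}$, $\mathtt r\mapsto\mathtt S$, $\mathtt L\mapsto\mathtt S$, $\mathtt l\mapsto\mathtt{Ll}$, $\mathtt S\mapsto\mathtt{Rl}$, $\mathtt s\mapsto\mathtt{Lr}$ (applied letterwise), and let $a_n$ be the number of letters of the word $P_1^n(\mathtt L)$, $n\ge 0$ (this is the length of the right side boundary of the polyomino $\mathcal S_n$ containing the Harter–Heighway dragon curve $\mathcal C_n$). Then $$a_n=a_{n-1}+2a_{n-3}\quad\text{for } n\ge 4,\qquad a_0=1,\ a_1=1,\ a_2=2.$$
   Context: $\mathcal C_n$ is the $n$-th iterate of the Harter–Heighway dragon curve (the turtle path of the word $P^n(A)$ for $P(A)=A+B$, $P(B)=A-B$), and $\mathcal S_n$ is the union of the squares having as a diagonal an edge of $\mathcal C_n$; by earlier work the right side of the boundary of $\mathcal S_n$ is traced self-avoidingly by the word $P_1^n(\mathtt L)$, one letter per boundary edge. *)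

theory Defs
  imports Main
begin

text \<open>Alphabet {R, r, L, l, S, s}; uppercase letters are written with suffix U,
lowercase with suffix l.\<close>
datatype letter = RU | Rl | LU | Ll | SU | Sl

fun P1_letter :: "letter \<Rightarrow> letter list" where
  "P1_letter RU = [RU, Rl]"
| "P1_letter Rl = [SU]"
| "P1_letter LU = [SU]"
| "P1_letter Ll = [LU, Ll]"
| "P1_letter SU = [RU, Ll]"
| "P1_letter Sl = [LU, Rl]"

definition P1 :: "letter list \<Rightarrow> letter list" where
  "P1 w = concat (map P1_letter w)"

definition a :: "nat \<Rightarrow> nat" where
  "a n = length ((P1 ^^ n) [LU])"

end

theory Submission
  imports Defs
begin

lemma P1_app: "P1 (u @ v) = P1 u @ P1 v"
  by (simp add: P1_def)

lemma P1n_app: "(P1 ^^ n) (u @ v) = (P1 ^^ n) u @ (P1 ^^ n) v"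
  by (induction n) (simp_all add: P1_app)

lemma P1nil: "(P1 ^^ n) [] = []"
  by (induction n) (simp_all add: P1_def)

definition f :: "nat \<Rightarrow> letter \<Rightarrow> nat" where
  "f n x = length ((P1 ^^ n) [x])"

lemma lenw: "length ((P1 ^^ n) w) = (\<Sum>x\<leftarrow>w. f n x)"
proof (induction w)
  case Nil
  then show ?case by (simp add: P1nil)
next
  case (Cons y w)
  have "(P1 ^^ n) (y # w) = (P1 ^^ n) [y] @ (P1 ^^ n) w"
    using P1n_app[of n "[y]" w] by simp
  then show ?case using Cons by (simp add: f_def)
qed
lemma fSuc: "f (Suc n) x = (\<Sum>y\<leftarrow>P1_letter x. f n y)"
proof -
  have "(P1 ^^ Suc n) [x] = (P1 ^^ n) (P1_letter x)"
  proof -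
    have "(P1 ^^ Suc n) [x] = (P1 ^^ n) (P1 [x])" by (simp only: funpow_Suc_right comp_def)
    moreover have "P1 [x] = P1_letter x" by (simp add: P1_def)
    ultimately show ?thesis by simp
  qed
  then show ?thesis using lenw[of n "P1_letter x"] unfolding f_def by (simp only:)
qed

lemma f0: "f 0 x = 1" by (simp add: f_def)

lemma fL: "f (Suc n) LU = f n SU" by (simp add: fSuc)
lemma fR: "f (Suc n) RU = f n RU + f n Rl" by (simp add: fSuc)
lemma fr: "f (Suc n) Rl = f n SU" by (simp add: fSuc)
lemma fl: "f (Suc n) Ll = f n LU + f n Ll" by (simp add: fSuc)
lemma fS: "f (Suc n) SU = f n RU + f n Ll" by (simp add: fSuc)

lemma S_rec: "f (Suc (Suc (Suc m))) SU = f (Suc (Suc m)) SU + 2 * f m SU"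
  by (simp only: fS fR fl fr fL)

lemma a_f: "a n = f n LU" by (simp add: a_def f_def)

theorem theorem2:
  shows "(\<forall>n\<ge>4. a n = a (n - 1) + 2 * a (n - 3)) \<and> a 0 = 1 \<and> a 1 = 1 \<and> a 2 = 2"
proof (intro conjI allI impI)
  fix n :: nat assume "n \<ge> 4"
  then obtain m where m: "n = Suc (Suc (Suc (Suc m)))" by (rule_tac m="n - 4" in that) simp
  have e1: "n - 1 = Suc (Suc (Suc m))" and e3: "n - 3 = Suc m" using m by simp_all
  show "a n = a (n - 1) + 2 * a (n - 3)"
    unfolding e1 e3 unfolding m a_f fL using S_rec[of m] by simp
next
  show "a 0 = 1" by (simp add: a_f f0)
  have "a 1 = f 0 SU" by (simp add: a_f fL[of 0, simplified])
  then show "a 1 = 1" by (simp add: f0)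
  have "a 2 = f 0 RU + f 0 Ll" unfolding a_f numeral_2_eq_2 fL fS by simp
  then show "a 2 = 2" by (simp add: f0)
qed

end
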